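(* Let $\kappa$ be an uncountable regular cardinal, let $\mathcal{I}$ be a $\kappa$-complete proper ideal on $\kappa$ containing every bounded subset of $\kappa$, and let $\nu\in\{2,\kappa\}$. Let $\varphi\colon\mathrm{Fn}_{\mathcal{I}}({}^{\kappa}\nu)\to\mathrm{Fn}_{\mathcal{I}}({}^{\kappa}\nu)$ be continuous. Then $\varphi^*\colon{}^{\kappa}\nu\to{}^{\kappa}\nu$ is continuous with respect to $\tau_{\mathcal{I}}$ on both sides.
   Context: ${}^{\kappa}\nu$ is the set of functions $\kappa\to\nu$, $\mathrm{Fn}_{\mathcal{I}}({}^{\kappa}\nu)$ the set of functions $f\colon D\to\nu$ with $D\in\mathcal{I}$, $\mathbf{N}_f=\{x:f\subseteq x\}$, and $\tau_{\mathcal{I}}$ the topology on ${}^{\kappa}\nu$ generated by the sets $\mathbf{N}_f$. A map $\varphi\colon\mathrm{Fn}_{\mathcal{I}}\to\mathrm{Fn}_{\mathcal{I}}$ is monotone if $f\subseteq g$ implies $\varphi(f)\subseteq\varphi(g)$; it is continuous if it is monotone and for all $x\in{}^{\kappa}\nu$ and $D\in\mathcal{I}$ there is $E\in\mathcal{I}$ with $D\subseteq\mathrm{dom}(\varphi(x\restriction E))$. For continuous $\varphi$, $\varphi^*(x)=\lim_{D\in\mathcal{I}}\varphi(x\restriction D)$, the limit of the net indexed by the directed set $(\mathcal{I},\subseteq)$ in $({}^{\kappa}\nu,\tau_{\mathcal{I}})$ (identifying $\varphi(x\restriction D)$ with any point of ${}^{\kappa}\nu$ extending it is unnecessary: explicitly,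 $\varphi^*(x)$ is the unique $z\in{}^{\kappa}\nu$ such that for every $D\in\mathcal{I}$ there is $E\in\mathcal{I}$ with $z\restriction D=\varphi(x\restriction E')\restriction D$ for all $E'\in\mathcal{I}$ with $E\subseteq E'$). *)

theory Defs
  imports "HOL-Analysis.Analysis"
begin

text \<open>The cardinal kappa is represented by a cardinal well-order r on the type 'k
  (Field r = UNIV).\<close>

definition bounded_in :: "'k rel \<Rightarrow> 'k set \<Rightarrow> bool" where
  "bounded_in r A \<longleftrightarrow> (\<exists>\<alpha>. \<forall>\<beta>\<in>A. (\<beta>, \<alpha>) \<in> r)"

definition kappa_complete_ideal :: "'k rel \<Rightarrow> 'k set set \<Rightarrow> bool" where
  "kappa_complete_ideal r I \<longleftrightarrow>
     (\<forall>A B. A \<in> I \<longrightarrow> B \<subseteq> A \<longrightarrow> B \<in> I) \<and>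
     (\<forall>F. F \<subseteq> I \<longrightarrow> (card_of F, r) \<in> ordLess \<longrightarrow> \<Union>F \<in> I) \<and>
     UNIV \<notin> I \<and>
     (\<forall>A. bounded_in r A \<longrightarrow> A \<in> I)"

definition Fn :: "'k set set \<Rightarrow> ('k \<rightharpoonup> 'v) set" where
  "Fn I = {f. dom f \<in> I}"

definition restr :: "('k \<Rightarrow> 'v) \<Rightarrow> 'k set \<Rightarrow> ('k \<rightharpoonup> 'v)" where
  "restr x D = (Some \<circ> x) |` D"

definition Nbhd :: "('k \<rightharpoonup> 'v) \<Rightarrow> ('k \<Rightarrow> 'v) set" where
  "Nbhd f = {x. f \<subseteq>\<^sub>m Some \<circ> x}"

definition tau :: "'k set set \<Rightarrow> ('k \<Rightarrow> 'v) topology" where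
  "tau I = topology_generated_by (Nbhd ` Fn I)"

definition monotone_Fn :: "'k set set \<Rightarrow> (('k \<rightharpoonup> 'v) \<Rightarrow> ('k \<rightharpoonup> 'v)) \<Rightarrow> bool" where
  "monotone_Fn I \<phi> \<longleftrightarrow>
     (\<forall>f\<in>Fn I. \<forall>g\<in>Fn I. f \<subseteq>\<^sub>m g \<longrightarrow> \<phi> f \<subseteq>\<^sub>m \<phi> g)"

definition continuous_Fn :: "'k set set \<Rightarrow> (('k \<rightharpoonup> 'v) \<Rightarrow> ('k \<rightharpoonup> 'v)) \<Rightarrow> bool" where
  "continuous_Fn I \<phi> \<longleftrightarrow> monotone_Fn I \<phi> \<and>
     (\<forall>x. \<forall>D\<in>I. \<exists>E\<in>I. D \<subseteq> dom (\<phi> (restr x E)))"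

definition phi_star :: "'k set set \<Rightarrow> (('k \<rightharpoonup> 'v) \<Rightarrow> ('k \<rightharpoonup> 'v)) \<Rightarrow> ('k \<Rightarrow> 'v) \<Rightarrow> ('k \<Rightarrow> 'v)" where
  "phi_star I \<phi> x = (THE z. \<forall>D\<in>I. \<exists>E\<in>I. \<forall>E'\<in>I. E \<subseteq> E' \<longrightarrow>
       (\<forall>\<alpha>\<in>D. \<phi> (restr x E') \<alpha> = Some (z \<alpha>)))"

end

theory Submission
  imports Defs
begin

lemma restr_dom[simp]: "dom (restr x E) = E"
  by (auto simp: restr_def)

lemma restr_le: "E1 \<subseteq> E2 \<Longrightarrow> restr x E1 \<subseteq>\<^sub>m restr x E2"
  by (auto simp: restr_def map_le_def)

locale setting =
  fixes I :: "'k set set" and \<phi> :: "('k \<rightharpoonup> 'v) \<Rightarrow> ('k \<rightharpoonup> 'v)"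
  assumes mono: "\<And>f g. f \<in> Fn I \<Longrightarrow> g \<in> Fn I \<Longrightarrow> f \<subseteq>\<^sub>m g \<Longrightarrow> \<phi> f \<subseteq>\<^sub>m \<phi> g"
    and cont: "\<And>x D. D \<in> I \<Longrightarrow> \<exists>E\<in>I. D \<subseteq> dom (\<phi> (restr x E))"
    and un: "\<And>A B. A \<in> I \<Longrightarrow> B \<in> I \<Longrightarrow> A \<union> B \<in> I"
    and sing: "\<And>a. {a} \<in> I"
    and emp: "{} \<in> I"
begin

lemma restr_Fn: "E \<in> I \<Longrightarrow> restr x E \<in> Fn I"
  by (simp add: Fn_def)

lemma ext_val:
  assumes "E1 \<in> I" "E2 \<in> I" "E1 \<subseteq> E2" "\<phi> (restr x E1) a = Some v"
  shows "\<phi> (restr x E2) a = Some v"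
proof -
  have "\<phi> (restr x E1) \<subseteq>\<^sub>m \<phi> (restr x E2)"
    using mono[OF restr_Fn restr_Fn restr_le] assms by blast
  then show ?thesis using assms(4) by (metis domI map_le_def)
qed

lemma agree:
  assumes "E1 \<in> I" "E2 \<in> I" "\<phi> (restr x E1) a = Some v" "\<phi> (restr x E2) a = Some w"
  shows "v = w"
proof -
  have "\<phi> (restr x (E1 \<union> E2)) a = Some v" using ext_val[of E1 "E1 \<union> E2"] assms un by auto
  moreover have "\<phi> (restr x (E1 \<union> E2)) a = Some w" using ext_val[of E2 "E1 \<union> E2"] assms un by auto
  ultimately show ?thesis by simp
qed

definition z0 where "z0 x a = (THE v. \<exists>E\<in>I. \<phi> (restr x E) a = Some v)"

lemma z0_char:
  assumes "E \<in> I" "\<phi> (restr x E) a = Some v"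
  shows "z0 x a = v"
  unfolding z0_def
  apply (rule the_equality)
  using assms agree by blast+

lemma z0_ex: "\<exists>E\<in>I. \<phi> (restr x E) a = Some (z0 x a)"
proof -
  obtain E where E: "E \<in> I" "{a} \<subseteq> dom (\<phi> (restr x E))" using cont[OF sing] by blast
  then obtain v where "\<phi> (restr x E) a = Some v" by blast
  then show ?thesis using E z0_char by metis
qed

lemma star_eq: "phi_star I \<phi> x = z0 x"
  unfolding phi_star_def
proof (rule the_equality)
  show "\<forall>D\<in>I. \<exists>E\<in>I. \<forall>E'\<in>I. E \<subseteq> E' \<longrightarrow> (\<forall>\<alpha>\<in>D. \<phi> (restr x E') \<alpha> = Some (z0 x \<alpha>))"
  proof
    fix D assume "D \<in> I"
    then obtain E where E: "E \<in> I" "D \<subseteq> dom (\<phi> (restr x E))" using cont by blast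
    show "\<exists>E\<in>I. \<forall>E'\<in>I. E \<subseteq> E' \<longrightarrow> (\<forall>\<alpha>\<in>D. \<phi> (restr x E') \<alpha> = Some (z0 x \<alpha>))"
    proof (intro bexI[OF _ E(1)] ballI impI)
      fix E' \<alpha> assume h: "E' \<in> I" "E \<subseteq> E'" "\<alpha> \<in> D"
      then obtain u where u: "\<phi> (restr x E) \<alpha> = Some u" using E by blast
      then have "z0 x \<alpha> = u" using z0_char E by blast
      then show "\<phi> (restr x E') \<alpha> = Some (z0 x \<alpha>)" using ext_val[OF E(1) h(1) h(2) u] by simp
    qed
  qed
next
  fix z assume H: "\<forall>D\<in>I. \<exists>E\<in>I. \<forall>E'\<in>I. E \<subseteq> E' \<longrightarrow> (\<forall>\<alpha>\<in>D. \<phi> (restr x E') \<alpha> = Some (z \<alpha>))"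
  show "z = z0 x"
  proof
    fix a
    obtain E where "E \<in> I" "\<forall>E'\<in>I. E \<subseteq> E' \<longrightarrow> (\<forall>\<alpha>\<in>{a}. \<phi> (restr x E') \<alpha> = Some (z \<alpha>))"
      using H sing by blast
    then have "\<phi> (restr x E) a = Some (z a)" "E \<in> I" by auto
    then show "z a = z0 x a" using z0_char by metis
  qed
qed

lemma restr_eq: "y \<in> Nbhd (restr x E) \<Longrightarrow> restr y E = restr x E"
proof (rule ext)
  fix a assume y: "y \<in> Nbhd (restr x E)"
  show "restr y E a = restr x E a"
  proof (cases "a \<in> E")
    case True
    then have "a \<in> dom (restr x E)" by simp
    then have "restr x E a = Some (y a)" using y unfolding Nbhd_def map_le_def by auto
    then show ?thesis using True by (simp add: restr_def)
  next
    case False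
    then show ?thesis by (simp add: restr_def)
  qed
qed

lemma self_Nbhd: "x \<in> Nbhd (restr x E)"
  unfolding Nbhd_def map_le_def by (simp add: restr_def)

lemma main: "continuous_map (tau I) (tau I) (phi_star I \<phi>)"
  unfolding tau_def
proof (rule continuous_on_generated_topo)
  have top: "topspace (topology_generated_by (Nbhd ` Fn I)) = UNIV"
  proof -
    have "Map.empty \<in> Fn I" using emp by (simp add: Fn_def)
    moreover have "Nbhd Map.empty = UNIV" by (simp add: Nbhd_def)
    ultimately show ?thesis by force
  qed
  show "phi_star I \<phi> ` topspace (topology_generated_by (Nbhd ` Fn I)) \<subseteq> \<Union> (Nbhd ` Fn I)"
    using top by (metis subset_UNIV topology_generated_by_topspace)
  fix U :: "('k \<Rightarrow> 'v) set" assume "U \<in> Nbhd ` Fn I"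
  then obtain f where f: "f \<in> Fn I" "U = Nbhd f" by blast
  let ?P = "phi_star I \<phi> -` U"
  have "\<forall>x\<in>?P. \<exists>E. E \<in> I \<and> x \<in> Nbhd (restr x E) \<and> Nbhd (restr x E) \<subseteq> ?P"
  proof
    fix x assume x: "x \<in> ?P"
    have df: "dom f \<in> I" using f(1) by (simp add: Fn_def)
    obtain E where E: "E \<in> I" "dom f \<subseteq> dom (\<phi> (restr x E))" using cont[OF df] by blast
    have xf: "f \<subseteq>\<^sub>m Some \<circ> phi_star I \<phi> x" using x f(2) by (simp add: Nbhd_def)
    have "Nbhd (restr x E) \<subseteq> ?P"
    proof
      fix y assume y: "y \<in> Nbhd (restr x E)"
      have eqa: "phi_star I \<phi> y a = phi_star I \<phi> x a" if ha: "a \<in> dom f" for a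
      proof -
        obtain u where u: "\<phi> (restr x E) a = Some u" using E(2) ha by blast
        then have u2: "\<phi> (restr y E) a = Some u" using restr_eq[OF y] by simp
        have "z0 y a = u" using z0_char[OF E(1) u2] .
        moreover have "z0 x a = u" using z0_char[OF E(1) u] .
        ultimately show ?thesis by (simp add: star_eq)
      qed
      have "f \<subseteq>\<^sub>m Some \<circ> phi_star I \<phi> y"
        unfolding map_le_def
      proof
        fix a assume a: "a \<in> dom f"
        then have "f a = Some (phi_star I \<phi> x a)" using xf unfolding map_le_def by simp
        then show "f a = (Some \<circ> phi_star I \<phi> y) a" using eqa[OF a] by simp
      qed
      then show "y \<in> ?P" using f(2) by (simp add: Nbhd_def)
    qed
    then show "\<exists>E. E \<in> I \<and> x \<in> Nbhd (restr x E) \<and> Nbhd (restr x E) \<subseteq> ?P"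
      using E self_Nbhd by blast
  qed
  from bchoice[OF this] obtain Ef where Ef: "\<forall>x\<in>?P. Ef x \<in> I \<and> x \<in> Nbhd (restr x (Ef x)) \<and> Nbhd (restr x (Ef x)) \<subseteq> ?P"
    by blast
  define N where "N = (\<lambda>x. Nbhd (restr x (Ef x))) ` ?P"
  have eq: "?P = \<Union>N"
  proof
    show "?P \<subseteq> \<Union>N" unfolding N_def using Ef by blast
    show "\<Union>N \<subseteq> ?P" unfolding N_def using Ef by blast
  qed
  have "generate_topology_on (Nbhd ` Fn I) (\<Union>N)"
  proof (rule generate_topology_on.UN)
    fix k assume "k \<in> N"
    then obtain x where x: "x \<in> ?P" "k = Nbhd (restr x (Ef x))" unfolding N_def by blast
    then have "restr x (Ef x) \<in> Fn I" using Ef restr_Fn by blast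
    then have "k \<in> Nbhd ` Fn I" using x(2) by blast
    then show "generate_topology_on (Nbhd ` Fn I) k" by (rule generate_topology_on.Basis)
  qed
  then have "openin (topology_generated_by (Nbhd ` Fn I)) ?P"
    using eq by (simp add: openin_topology_generated_by_iff)
  then show "openin (topology_generated_by (Nbhd ` Fn I)) (?P \<inter> topspace (topology_generated_by (Nbhd ` Fn I)))"
    by (simp only: top Int_UNIV_right)
qed

end

theorem proposition3p2:
  fixes r :: "'k rel" and I :: "'k set set"
    and \<phi> :: "('k \<rightharpoonup> 'v) \<Rightarrow> ('k \<rightharpoonup> 'v)"
  assumes "card_order r"
    and "\<not> countable (UNIV :: 'k set)"
    and "regularCard r"
    and "kappa_complete_ideal r I"
    and "card (UNIV :: 'v set) = 2 \<or> (card_of (UNIV :: 'v set), r) \<in> ordIso"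
    and "\<forall>f\<in>Fn I. \<phi> f \<in> Fn I"
    and "continuous_Fn I \<phi>"
  shows "continuous_map (tau I) (tau I) (phi_star I \<phi>)"
proof -
  have wo0: "well_order_on UNIV r" using assms(1) card_order_on_well_order_on by blast
  have fld: "Field r = UNIV" using wo0 well_order_on_Field by blast
  have wo: "Well_order r" unfolding fld by (rule wo0)
  have "\<not> finite (UNIV :: 'k set)" using assms(2) countable_finite by blast
  then have inf: "\<not> finite (Field r)" unfolding fld .
  have fin: "(card_of F, r) \<in> ordLess" if "finite F" for F :: "'k set set"
  proof -
    have "finite (Field (card_of F))" using that by (simp only: Field_card_of)
    then show ?thesis using finite_ordLess_infinite[OF card_of_Well_order wo _ inf] by blast
  qed
  have ideal: "\<forall>F. F \<subseteq> I \<longrightarrow> (card_of F, r) \<in> ordLess \<longrightarrow> \<Union>F \<in> I"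
    and bnd: "\<forall>A. bounded_in r A \<longrightarrow> A \<in> I"
    using assms(4) unfolding kappa_complete_ideal_def by auto
  have K: "A \<union> B \<in> I" if "A \<in> I" "B \<in> I" for A B
  proof -
    have "{A, B} \<subseteq> I" using that by blast
    moreover have "(card_of {A, B}, r) \<in> ordLess" by (rule fin) simp
    ultimately have "\<Union>{A, B} \<in> I" using ideal by blast
    then show "A \<union> B \<in> I" by simp
  qed
  have "refl_on (Field r) r" using wo unfolding well_order_on_def linear_order_on_def partial_order_on_def preorder_on_def by simp
  then have refl: "(a, a) \<in> r" for a
    using fld unfolding refl_on_def by blast
  have S: "{a} \<in> I" for a
  proof -
    have "bounded_in r {a}" unfolding bounded_in_def using refl by blast
    then show ?thesis using bnd by simp
  qed
  have E: "{} \<in> I"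
  proof -
    have "bounded_in r {}" unfolding bounded_in_def by blast
    then show ?thesis using bnd by simp
  qed
  interpret setting I \<phi>
  proof
    show "\<phi> f \<subseteq>\<^sub>m \<phi> g" if "f \<in> Fn I" "g \<in> Fn I" "f \<subseteq>\<^sub>m g" for f g
      using assms(7) that unfolding continuous_Fn_def monotone_Fn_def by blast
    show "\<exists>E\<in>I. D \<subseteq> dom (\<phi> (restr x E))" if "D \<in> I" for x D
      using assms(7) that unfolding continuous_Fn_def by blast
  qed (use K S E in auto)
  show ?thesis by (rule main)
qed

end
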